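(* Let $(X,d,\ll,\le,\tau)$ be a locally causally closed and $d$-compatible Lorentzian pre-length space, and let $(\gamma_n)_n$ be a sequence of future-directed causal curves $\gamma_n:[0,L_n]\to X$ parametrized with respect to $d$-arclength, with $L_n:=L^d(\gamma_n)\to\infty$. Suppose that either there is a compact set containing every $\gamma_n([0,L_n])$, or $d$ is proper and $\gamma_n(0)\to x$ for some $x\in X$. Then there exist a subsequence $(\gamma_{n_k})_k$ and a future-directed causal curve $\gamma:[0,\infty)\to X$ such that $\gamma_{n_k}\to\gamma$ locally uniformly (i.e., for every $T>0$, $\gamma_{n_k}|_{[0,T]}\to\gamma|_{[0,T]}$ uniformly, this being defined for all $k$ large). Moreover, $\gamma$ is inextendible, i.e., $\lim_{t\to\infty}\gamma(t)$ does not exist in $X$.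
   Context: A causal space $(X,\ll,\le)$: $\le$ reflexive and transitive, $\ll$ transitive, $x\ll y\Rightarrow x\le y$. A Lorentzian pre-length space $(X,d,\ll,\le,\tau)$ is a causal space with a metric $d$ and $\tau:X\times X\to[0,\infty]$ lower semicontinuous w.r.t. $d$, with $\tau(x,z)\ge\tau(x,y)+\tau(y,z)$ for $x\le y\le z$, $\tau(x,y)=0$ if $x\not\le y$, $\tau(x,y)>0\iff x\ll y$. A future-directed causal curve is a non-constant $d$-locally Lipschitz $\gamma:I\to X$ with $\gamma(t_1)\le\gamma(t_2)$ for $t_1<t_2$; causal curves are future- or past-directed ones. $L^d$ is $d$-arclength; $d$ is proper if closed bounded sets are compact. Locally causally closed: every point has a neighborhood $U$ such that $p_n,q_n\in U$, $p_n\le q_n$, $p_n\to p\in\bar U$, $q_n\to q\in\bar U$ imply $p\le q$. $d$-compatible: every point has a neighborhood $U$ and $C>0$ with $L^d(\gamma)\le C$ for all causal curves $\gamma$ contained in $U$. A future-directed causal curve on $[a,b)$ is inextendible if it admits no extension to a future-directed causal curve including the endpoint; for curves on $[0,\infty)$ this is understood as non-existence of $\lim_{t\to\infty}\gamma(t)$. *)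

theory Defs
  imports "HOL-Analysis.Analysis"
begin

text \<open>The metric space (X,d) is the type 'a with its metric dist.
  The causal relations are ll (chronological) and le (causal); tau is the time separation.\<close>

definition causal_space :: "('a \<Rightarrow> 'a \<Rightarrow> bool) \<Rightarrow> ('a \<Rightarrow> 'a \<Rightarrow> bool) \<Rightarrow> bool" where
  "causal_space ll le \<longleftrightarrow> reflp le \<and> transp le \<and> transp ll \<and> (\<forall>x y. ll x y \<longrightarrow> le x y)"

definition lorentzian_pre_length_space ::
  "('a::metric_space \<Rightarrow> 'a \<Rightarrow> bool) \<Rightarrow> ('a \<Rightarrow> 'a \<Rightarrow> bool) \<Rightarrow> ('a \<Rightarrow> 'a \<Rightarrow> ennreal) \<Rightarrow> bool" where
  "lorentzian_pre_length_space ll le tau \<longleftrightarrow>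
     causal_space ll le \<and>
     (\<forall>c. open {p :: 'a \<times> 'a. c < tau (fst p) (snd p)}) \<and>
     (\<forall>x y z. le x y \<and> le y z \<longrightarrow> tau x z \<ge> tau x y + tau y z) \<and>
     (\<forall>x y. \<not> le x y \<longrightarrow> tau x y = 0) \<and>
     (\<forall>x y. tau x y > 0 \<longleftrightarrow> ll x y)"

definition curve_length :: "(real \<Rightarrow> 'a::metric_space) \<Rightarrow> real set \<Rightarrow> ereal" where
  "curve_length \<gamma> I = Sup {ereal (\<Sum>i<n. dist (\<gamma> (p i)) (\<gamma> (p (Suc i)))) | n p.
       (\<forall>i\<le>n. p i \<in> I) \<and> (\<forall>i<n. p i \<le> p (Suc i))}"

definition locally_lipschitz_on :: "real set \<Rightarrow> (real \<Rightarrow> 'a::metric_space) \<Rightarrow> bool" where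
  "locally_lipschitz_on I \<gamma> \<longleftrightarrow>
     (\<forall>t\<in>I. \<exists>e>0. \<exists>C. \<forall>s\<in>I \<inter> ball t e. \<forall>u\<in>I \<inter> ball t e. dist (\<gamma> s) (\<gamma> u) \<le> C * \<bar>s - u\<bar>)"

definition future_causal_curve ::
  "('a::metric_space \<Rightarrow> 'a \<Rightarrow> bool) \<Rightarrow> (real \<Rightarrow> 'a) \<Rightarrow> real set \<Rightarrow> bool" where
  "future_causal_curve le \<gamma> I \<longleftrightarrow> is_interval I \<and> locally_lipschitz_on I \<gamma> \<and>
     (\<exists>s\<in>I. \<exists>t\<in>I. \<gamma> s \<noteq> \<gamma> t) \<and>
     (\<forall>t1\<in>I. \<forall>t2\<in>I. t1 < t2 \<longrightarrow> le (\<gamma> t1) (\<gamma> t2))"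

definition past_causal_curve ::
  "('a::metric_space \<Rightarrow> 'a \<Rightarrow> bool) \<Rightarrow> (real \<Rightarrow> 'a) \<Rightarrow> real set \<Rightarrow> bool" where
  "past_causal_curve le \<gamma> I \<longleftrightarrow> is_interval I \<and> locally_lipschitz_on I \<gamma> \<and>
     (\<exists>s\<in>I. \<exists>t\<in>I. \<gamma> s \<noteq> \<gamma> t) \<and>
     (\<forall>t1\<in>I. \<forall>t2\<in>I. t1 < t2 \<longrightarrow> le (\<gamma> t2) (\<gamma> t1))"

definition causal_curve ::
  "('a::metric_space \<Rightarrow> 'a \<Rightarrow> bool) \<Rightarrow> (real \<Rightarrow> 'a) \<Rightarrow> real set \<Rightarrow> bool" where
  "causal_curve le \<gamma> I \<longleftrightarrow> future_causal_curve le \<gamma> I \<or> past_causal_curve le \<gamma> I"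

definition locally_causally_closed :: "('a::metric_space \<Rightarrow> 'a \<Rightarrow> bool) \<Rightarrow> bool" where
  "locally_causally_closed le \<longleftrightarrow>
     (\<forall>x. \<exists>U. x \<in> interior U \<and>
        (\<forall>p q p0 q0. (\<forall>n. p n \<in> U \<and> q n \<in> U \<and> le (p n) (q n)) \<and>
            p \<longlonglongrightarrow> p0 \<and> p0 \<in> closure U \<and> q \<longlonglongrightarrow> q0 \<and> q0 \<in> closure U
            \<longrightarrow> le p0 q0))"

definition d_compatible :: "('a::metric_space \<Rightarrow> 'a \<Rightarrow> bool) \<Rightarrow> bool" where
  "d_compatible le \<longleftrightarrow>
     (\<forall>x. \<exists>U C. x \<in> interior U \<and> C > 0 \<and>
        (\<forall>\<gamma> I. causal_curve le \<gamma> I \<and> \<gamma> ` I \<subseteq> U \<longrightarrow> curve_length \<gamma> I \<le> ereal C))"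

definition proper_metric :: "'a::metric_space itself \<Rightarrow> bool" where
  "proper_metric _ \<longleftrightarrow> (\<forall>S :: 'a set. closed S \<and> bounded S \<longrightarrow> compact S)"

end

theory Submission
  imports Defs
begin


lemma arc_lip:
  assumes "curve_length c {s..t} = ereal (t - s)" "s \<le> t"
  shows "dist (c s) (c t) \<le> t - s"
proof -
  define p where "p = (\<lambda>i::nat. if i = 0 then s else t)"
  have "ereal (\<Sum>i<1. dist (c (p i)) (c (p (Suc i)))) \<in>
     {ereal (\<Sum>i<n. dist (c (p i)) (c (p (Suc i)))) | n p.
       (\<forall>i\<le>n. p i \<in> {s..t}) \<and> (\<forall>i<n. p i \<le> p (Suc i))}"
    using assms(2) unfolding p_def
    apply (simp only: mem_Collect_eq)
    apply (rule exI[of _ 1])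
    apply (rule exI[of _ "\<lambda>i::nat. if i = 0 then s else t"])
    by (auto simp: le_Suc_eq)
  then have "ereal (\<Sum>i<1. dist (c (p i)) (c (p (Suc i)))) \<le> curve_length c {s..t}"
    unfolding curve_length_def by (rule Sup_upper)
  then show ?thesis using assms(1) by (simp add: p_def)
qed

lemma const_len:
  assumes "\<forall>s\<in>I. \<forall>t\<in>I. c s = c t"
  shows "curve_length c I \<le> 0"
  unfolding curve_length_def
proof (rule Sup_least)
  fix x assume "x \<in> {ereal (\<Sum>i<n. dist (c (p i)) (c (p (Suc i)))) | n p.
       (\<forall>i\<le>n. p i \<in> I) \<and> (\<forall>i<n. p i \<le> p (Suc i))}"
  then obtain n p where x: "x = ereal (\<Sum>i<n. dist (c (p i)) (c (p (Suc i))))"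
    and h: "\<forall>i\<le>n. p i \<in> I" by blast
  have "(\<Sum>i<n. dist (c (p i)) (c (p (Suc i)))) = 0"
    using h assms by (intro sum.neutral) auto
  then show "x \<le> 0" using x by simp
qed

lemma local_to_global:
  fixes R :: "real \<Rightarrow> real \<Rightarrow> bool"
  assumes trans: "\<And>a b c. R a b \<Longrightarrow> R b c \<Longrightarrow> R a c" and refl: "\<And>a. R a a"
    and loc: "\<And>s. s \<in> {t1..t2} \<Longrightarrow> \<exists>d>0. \<forall>a b. a \<in> ball s d \<inter> {t1..t2} \<longrightarrow>
                 b \<in> ball s d \<inter> {t1..t2} \<longrightarrow> a \<le> b \<longrightarrow> R a b"
    and le12: "t1 \<le> t2"
  shows "R t1 t2"
proof -
  obtain d where d: "\<And>s. s \<in> {t1..t2} \<Longrightarrow> d s > 0 \<and> (\<forall>a b. a \<in> ball s (d s) \<inter> {t1..t2} \<longrightarrow>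
                 b \<in> ball s (d s) \<inter> {t1..t2} \<longrightarrow> a \<le> b \<longrightarrow> R a b)"
    using loc by metis
  obtain \<delta> where dpos: "0 < \<delta>" and leb: "\<And>T. T \<subseteq> {t1..t2} \<Longrightarrow> diameter T < \<delta> \<Longrightarrow>
      \<exists>B \<in> (\<lambda>s. ball s (d s)) ` {t1..t2}. T \<subseteq> B"
  proof (rule Lebesgue_number_lemma[of "{t1..t2}" "(\<lambda>s. ball s (d s)) ` {t1..t2}"])
    show "compact {t1..t2}" by simp
    show "(\<lambda>s. ball s (d s)) ` {t1..t2} \<noteq> {}" using le12 by auto
    show "{t1..t2} \<subseteq> \<Union> ((\<lambda>s. ball s (d s)) ` {t1..t2})"
      using d by force
  qed auto
  have small: "R a b" if ab: "t1 \<le> a" "a \<le> b" "b \<le> t2" "b - a < \<delta>" for a b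
  proof -
    have "diameter {a, b} \<le> b - a"
      by (rule diameter_le) (use that in auto)
    then obtain s where s: "s \<in> {t1..t2}" "{a,b} \<subseteq> ball s (d s)"
      using leb[of "{a,b}"] ab by fastforce
    then show ?thesis using d[OF s(1)] ab by auto
  qed
  define h where "h = \<delta> / 2"
  have hpos: "h > 0" using dpos h_def by simp
  have ind: "R t1 (min t2 (t1 + real n * h))" for n
  proof (induction n)
    case 0
    then show ?case using refl le12 by (simp add: min_def)
  next
    case (Suc n)
    have "R (min t2 (t1 + real n * h)) (min t2 (t1 + real (Suc n) * h))"
      by (rule small) (use hpos le12 h_def dpos in \<open>auto simp: min_def algebra_simps\<close>)
    then show ?case using Suc trans by blast
  qed
  obtain n where "(t2 - t1) / h < real n" using reals_Archimedean2 by blast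
  then have "t2 - t1 < real n * h" using hpos by (simp add: field_simps)
  then have "min t2 (t1 + real n * h) = t2" by simp
  then show ?thesis using ind[of n] by simp
qed


lemma clamp_lip: "\<bar>max 0 (min s (l::real)) - max 0 (min t l)\<bar> \<le> \<bar>s - t\<bar>"
  unfolding max_def min_def by (auto split: if_splits)
lemma clamp_le: "(0::real) < l \<Longrightarrow> \<bar>0 - max 0 (min t (l::real))\<bar> \<le> \<bar>t\<bar>"
  unfolding max_def min_def by (auto split: if_splits)
lemma compact_PiE_rat:
  fixes C :: "real \<Rightarrow> 'a::metric_space set"
  assumes "\<And>t. compact (C t)"
  shows "compact (PiE (UNIV::rat set) (\<lambda>q. C (of_rat q)))"
proof -
  have "compactin (product_topology (\<lambda>i. euclidean) UNIV) (PiE (UNIV::rat set) (\<lambda>q. C (of_rat q)))"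
    by (subst compactin_PiE) (use assms in auto)
  then show ?thesis by (simp add: euclidean_product_topology)
qed


theorem theorem3p14:
  fixes ll le :: "'a::metric_space \<Rightarrow> 'a \<Rightarrow> bool"
    and tau :: "'a \<Rightarrow> 'a \<Rightarrow> ennreal"
    and \<gamma> :: "nat \<Rightarrow> real \<Rightarrow> 'a"
    and L :: "nat \<Rightarrow> real"
  assumes lpls: "lorentzian_pre_length_space ll le tau"
    and lcc: "locally_causally_closed le"
    and comp: "d_compatible le"
    and curves: "\<And>n. future_causal_curve le (\<gamma> n) {0..L n}"
    and arclength: "\<And>n s t. 0 \<le> s \<Longrightarrow> s \<le> t \<Longrightarrow> t \<le> L n \<Longrightarrow>
                       curve_length (\<gamma> n) {s..t} = ereal (t - s)"
    and Lto: "filterlim L at_top sequentially"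
    and bnd: "(\<exists>K. compact K \<and> (\<forall>n. \<gamma> n ` {0..L n} \<subseteq> K)) \<or>
              (proper_metric TYPE('a) \<and> (\<exists>x. (\<lambda>n. \<gamma> n 0) \<longlonglongrightarrow> x))"
  shows "\<exists>(r::nat \<Rightarrow> nat) g. strict_mono r \<and> future_causal_curve le g {0..} \<and>
           (\<forall>T>0. \<forall>e>0. \<exists>N. \<forall>k\<ge>N. T \<le> L (r k) \<and>
                 (\<forall>t\<in>{0..T}. dist (\<gamma> (r k) t) (g t) < e)) \<and>
           \<not> (\<exists>y. (g \<longlongrightarrow> y) at_top)"
proof -
  have reflle: "\<And>x. le x x" and transle: "\<And>x y z. le x y \<Longrightarrow> le y z \<Longrightarrow> le x z"
    using lpls unfolding lorentzian_pre_length_space_def causal_space_def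
    by (meson reflpD, meson transpD)
  have Lpos: "L n > 0" for n
  proof (rule ccontr)
    assume "\<not> L n > 0"
    moreover obtain s t where "s \<in> {0..L n}" "t \<in> {0..L n}" "\<gamma> n s \<noteq> \<gamma> n t"
      using curves[of n] unfolding future_causal_curve_def by blast
    ultimately have "s = t" by auto
    then show False using \<open>\<gamma> n s \<noteq> \<gamma> n t\<close> by simp
  qed
  have lip: "dist (\<gamma> n s) (\<gamma> n t) \<le> \<bar>s - t\<bar>" if "s \<in> {0..L n}" "t \<in> {0..L n}" for n s t
  proof (cases "s \<le> t")
    case True
    then show ?thesis using arc_lip[OF arclength[of s t n]] that by auto
  next
    case False
    then show ?thesis using arc_lip[OF arclength[of t s n]] that by (auto simp: dist_commute)
  qed
  define cl where "cl n t = max 0 (min t (L n))" for n t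
  define c where "c n t = \<gamma> n (cl n t)" for n t
  have cl_in: "cl n t \<in> {0..L n}" for n t using Lpos[of n] by (auto simp: cl_def)
  have cl_id: "t \<in> {0..L n} \<Longrightarrow> cl n t = t" for n t by (auto simp: cl_def)
  have c_id: "t \<in> {0..L n} \<Longrightarrow> c n t = \<gamma> n t" for n t by (simp add: c_def cl_id)
  have clip: "dist (c n s) (c n t) \<le> \<bar>s - t\<bar>" for n s t
  proof -
    have "dist (c n s) (c n t) \<le> \<bar>cl n s - cl n t\<bar>" unfolding c_def by (rule lip[OF cl_in cl_in])
    also have "\<dots> \<le> \<bar>s - t\<bar>" unfolding cl_def by (rule clamp_lip)
    finally show ?thesis .
  qed
  obtain C where Ccomp: "\<And>t. compact (C t)" and Cin: "\<And>n t. c n t \<in> C t"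
  proof (cases "\<exists>K. compact K \<and> (\<forall>n. \<gamma> n ` {0..L n} \<subseteq> K)")
    case True
    then obtain K where K: "compact K" "\<And>n. \<gamma> n ` {0..L n} \<subseteq> K" by blast
    show ?thesis
    proof (rule that[of "\<lambda>_. K"])
      show "compact K" by (rule K(1))
      show "c n t \<in> K" for n t using K(2)[of n] cl_in[of n t] unfolding c_def by blast
    qed
  next
    case False
    then have pm: "proper_metric TYPE('a)" and "\<exists>x. (\<lambda>n. \<gamma> n 0) \<longlonglongrightarrow> x" using bnd by blast+
    then obtain x where "(\<lambda>n. \<gamma> n 0) \<longlonglongrightarrow> x" by blast
    then have "bounded (range (\<lambda>n. \<gamma> n 0))" by (rule convergent_imp_bounded)
    then obtain B where B: "\<And>n. dist x (\<gamma> n 0) \<le> B" unfolding bounded_any_center[of _ x] by auto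
    show ?thesis
    proof (rule that[of "\<lambda>t. cball x (B + \<bar>t\<bar>)"])
      show "compact (cball x (B + \<bar>t\<bar>))" for t
        using pm unfolding proper_metric_def by auto
      show "c n t \<in> cball x (B + \<bar>t\<bar>)" for n t
      proof -
        have "dist (\<gamma> n 0) (c n t) \<le> \<bar>0 - cl n t\<bar>" unfolding c_def
          by (rule lip) (use cl_in Lpos[of n] in auto)
        also have "\<dots> \<le> \<bar>t\<bar>" unfolding cl_def by (rule clamp_le[OF Lpos])
        finally show ?thesis using B[of n] dist_triangle[of x "c n t" "\<gamma> n 0"] by simp
      qed
    qed
  qed
  define F where "F n = (\<lambda>q::rat. c n (of_rat q))" for n
  have "seq_compact (PiE (UNIV::rat set) (\<lambda>q. C (of_rat q)))"
    by (rule compact_imp_seq_compact, rule compact_PiE_rat, rule Ccomp)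
  moreover have "\<forall>n. F n \<in> PiE (UNIV::rat set) (\<lambda>q. C (of_rat q))"
    using Cin by (auto simp: F_def)
  ultimately obtain f r where rmono: "strict_mono r" and Fr: "(F \<circ> r) \<longlonglongrightarrow> f"
    by (rule seq_compactE) blast
  have ptw: "(\<lambda>k. c (r k) (of_rat q)) \<longlonglongrightarrow> f q" for q
  proof -
    have "((\<lambda>k. (\<lambda>x. x q) ((F \<circ> r) k)) \<longlongrightarrow> (\<lambda>x. x q) f) sequentially"
      by (rule continuous_on_tendsto_compose[OF continuous_on_product_coordinates Fr]) auto
    then show ?thesis by (simp add: F_def)
  qed
  have UC: "\<exists>N. \<forall>k\<ge>N. \<forall>l\<ge>N. \<forall>t\<in>{-T..T}. dist (c (r k) t) (c (r l) t) < e"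
    if epos: "e > 0" for T e
  proof -
    obtain D where D: "finite D" "{-T..T} \<subseteq> (\<Union>q\<in>D. ball (of_rat q) (e/4))"
    proof (rule compactE_image[of "{-T..T}" "UNIV::rat set" "\<lambda>q. ball (of_rat q) (e/4)"])
      show "compact {-T..T}" by simp
      show "open (ball (of_rat q) (e/4))" for q by simp
      show "{-T..T} \<subseteq> (\<Union>q\<in>UNIV. ball (of_rat q) (e/4))"
      proof
        fix t :: real
        obtain q where "t < of_rat q" "of_rat q < t + e/4" using of_rat_dense[of t "t + e/4"] epos by auto
        then have "t \<in> ball (of_rat q) (e/4)" by (auto simp: dist_real_def)
        then show "t \<in> (\<Union>q\<in>UNIV. ball (of_rat q) (e/4))" by blast
      qed
    qed blast
    have "\<forall>\<^sub>F k in sequentially. \<forall>q\<in>D. dist (c (r k) (of_rat q)) (f q) < e/4"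
    proof (rule eventually_ball_finite[OF D(1)], rule ballI)
      fix q show "\<forall>\<^sub>F k in sequentially. dist (c (r k) (of_rat q)) (f q) < e/4"
        using ptw[of q] epos unfolding tendsto_iff by (meson divide_pos_pos zero_less_numeral)
    qed
    then obtain N where N: "\<And>k q. k \<ge> N \<Longrightarrow> q \<in> D \<Longrightarrow> dist (c (r k) (of_rat q)) (f q) < e/4"
      unfolding eventually_sequentially by blast
    show ?thesis
    proof (intro exI allI impI ballI)
      fix k l t assume kl: "N \<le> k" "N \<le> l" and t: "t \<in> {-T..T}"
      then obtain q where q: "q \<in> D" "dist (of_rat q) t < e/4" using D(2) by auto
      have "dist (c (r k) t) (c (r l) t) \<le> dist (c (r k) t) (c (r k) (of_rat q)) +
          dist (c (r k) (of_rat q)) (f q) + dist (f q) (c (r l) (of_rat q)) + dist (c (r l) (of_rat q)) (c (r l) t)"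
        using dist_triangle[of "c (r k) t" "c (r l) t" "c (r k) (of_rat q)"]
          dist_triangle[of "c (r k) (of_rat q)" "c (r l) t" "f q"]
          dist_triangle[of "f q" "c (r l) t" "c (r l) (of_rat q)"] by linarith
      also have "\<dots> < e/4 + e/4 + e/4 + e/4"
      proof -
        have a: "dist (c (r k) t) (c (r k) (of_rat q)) < e/4"
          using clip[of "r k" t "of_rat q"] q(2) by (simp add: dist_real_def abs_minus_commute)
        have b: "dist (c (r l) (of_rat q)) (c (r l) t) < e/4"
          using clip[of "r l" "of_rat q" t] q(2) by (simp add: dist_real_def)
        show ?thesis using a b N[OF kl(1) q(1)] N[OF kl(2) q(1)] dist_commute[of "f q" "c (r l) (of_rat q)"] by linarith
      qed
      finally show "dist (c (r k) t) (c (r l) t) < e" by simp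
    qed
  qed
  have cauchy: "Cauchy (\<lambda>k. c (r k) t)" for t
    unfolding Cauchy_def
  proof (intro allI impI)
    fix e :: real assume "e > 0"
    then obtain N where N: "\<forall>k\<ge>N. \<forall>l\<ge>N. \<forall>s\<in>{-\<bar>t\<bar>..\<bar>t\<bar>}. dist (c (r k) s) (c (r l) s) < e"
      using UC by blast
    have "t \<in> {-\<bar>t\<bar>..\<bar>t\<bar>}" using abs_ge_self[of t] abs_ge_minus_self[of t] by auto
    then show "\<exists>M. \<forall>m\<ge>M. \<forall>n\<ge>M. dist (c (r m) t) (c (r n) t) < e" using N by blast
  qed
  define g where "g t = lim (\<lambda>k. c (r k) t)" for t
  have conv: "(\<lambda>k. c (r k) t) \<longlonglongrightarrow> g t" for t
  proof -
    have "complete (C t)" by (rule compact_imp_complete[OF Ccomp])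
    then have "\<exists>l\<in>C t. (\<lambda>k. c (r k) t) \<longlonglongrightarrow> l"
      unfolding complete_def using Cin cauchy[of t] by (metis (no_types, lifting))
    then obtain l where "(\<lambda>k. c (r k) t) \<longlonglongrightarrow> l" by blast
    then show ?thesis unfolding g_def by (simp add: limI)
  qed
  have unif: "\<exists>N. \<forall>k\<ge>N. \<forall>t\<in>{-T..T}. dist (c (r k) t) (g t) < e" if epos: "e > 0" for T e
  proof -
    obtain N where N: "\<forall>k\<ge>N. \<forall>l\<ge>N. \<forall>t\<in>{-T..T}. dist (c (r k) t) (c (r l) t) < e/2"
      using UC[of "e/2" T] epos by (meson half_gt_zero)
    have "dist (c (r k) t) (g t) \<le> e/2" if "k \<ge> N" "t \<in> {-T..T}" for k t
    proof (rule tendsto_upperbound)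
      show "((\<lambda>l. dist (c (r k) t) (c (r l) t)) \<longlongrightarrow> dist (c (r k) t) (g t)) sequentially"
        by (intro tendsto_intros conv)
      show "\<forall>\<^sub>F l in sequentially. dist (c (r k) t) (c (r l) t) \<le> e/2"
        unfolding eventually_sequentially using N that by (meson less_imp_le)
    qed simp
    then show ?thesis using epos by (intro exI[of _ N]) force
  qed
  have glip: "dist (g s) (g t) \<le> \<bar>s - t\<bar>" for s t
  proof (rule tendsto_upperbound)
    show "((\<lambda>k. dist (c (r k) s) (c (r k) t)) \<longlongrightarrow> dist (g s) (g t)) sequentially"
      by (intro tendsto_intros conv)
    show "\<forall>\<^sub>F k in sequentially. dist (c (r k) s) (c (r k) t) \<le> \<bar>s - t\<bar>"
      using clip by simp
  qed simp
  have evL: "\<forall>\<^sub>F k in sequentially. T \<le> L (r k)" for T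
  proof -
    have "filterlim (\<lambda>k. L (r k)) at_top sequentially"
      using filterlim_compose[OF Lto filterlim_subseq[OF rmono]] by (simp add: o_def)
    then show ?thesis by (simp add: filterlim_at_top)
  qed
  have loc: "\<exists>d>0. \<forall>a b. a \<in> ball s0 d \<inter> {0..} \<longrightarrow> b \<in> ball s0 d \<inter> {0..} \<longrightarrow> a \<le> b
      \<longrightarrow> le (g a) (g b)" for s0
  proof -
    obtain U where U: "g s0 \<in> interior U" and
      Ucl: "\<And>p q p0 q0. (\<forall>n. p n \<in> U \<and> q n \<in> U \<and> le (p n) (q n)) \<and>
            p \<longlonglongrightarrow> p0 \<and> p0 \<in> closure U \<and> q \<longlonglongrightarrow> q0 \<and> q0 \<in> closure U
            \<Longrightarrow> le p0 q0"
      using lcc unfolding locally_causally_closed_def by blast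
    obtain \<epsilon> where epos: "\<epsilon> > 0" and eb: "ball (g s0) \<epsilon> \<subseteq> interior U"
      using U open_interior[of U] open_contains_ball by blast
    have ebU: "ball (g s0) \<epsilon> \<subseteq> U" using eb interior_subset by blast
    show ?thesis
    proof (intro exI[of _ "\<epsilon>/2"] conjI allI impI)
      show "\<epsilon>/2 > 0" using epos by simp
      fix a b assume a: "a \<in> ball s0 (\<epsilon>/2) \<inter> {0..}" and b: "b \<in> ball s0 (\<epsilon>/2) \<inter> {0..}" and ab: "a \<le> b"
      show "le (g a) (g b)"
      proof (cases "a = b")
        case True then show ?thesis using reflle by simp
      next
        case False
        with ab have ab': "a < b" by simp
        have ga: "dist (g a) (g s0) < \<epsilon>/2" using glip[of a s0] a abs_minus_commute[of a s0] by (auto simp: dist_real_def)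
        have gb: "dist (g b) (g s0) < \<epsilon>/2" using glip[of b s0] b abs_minus_commute[of b s0] by (auto simp: dist_real_def)
        have "\<forall>\<^sub>F k in sequentially. dist (c (r k) a) (g a) < \<epsilon>/2 \<and> dist (c (r k) b) (g b) < \<epsilon>/2 \<and> b \<le> L (r k)"
        proof (intro eventually_conj)
          have e2: "\<epsilon>/2 > 0" using epos by simp
          show "\<forall>\<^sub>F k in sequentially. dist (c (r k) a) (g a) < \<epsilon>/2"
            using conv[of a] e2 unfolding tendsto_iff by blast
          show "\<forall>\<^sub>F k in sequentially. dist (c (r k) b) (g b) < \<epsilon>/2"
            using conv[of b] e2 unfolding tendsto_iff by blast
          show "\<forall>\<^sub>F k in sequentially. b \<le> L (r k)" by (rule evL)
        qed
        then obtain N where N: "\<And>k. k \<ge> N \<Longrightarrow> dist (c (r k) a) (g a) < \<epsilon>/2 \<and> dist (c (r k) b) (g b) < \<epsilon>/2 \<and> b \<le> L (r k)"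
          unfolding eventually_sequentially by blast
        define p where "p k = c (r (k + N)) a" for k
        define q where "q k = c (r (k + N)) b" for k
        have "le (g a) (g b)"
        proof (rule Ucl[of p q])
          have "p k \<in> U \<and> q k \<in> U \<and> le (p k) (q k)" for k
          proof -
            have Nk: "dist (c (r (k+N)) a) (g a) < \<epsilon>/2" "dist (c (r (k+N)) b) (g b) < \<epsilon>/2" "b \<le> L (r (k+N))"
              using N[of "k+N"] by auto
            have "dist (p k) (g s0) < \<epsilon>" using Nk(1) ga dist_triangle[of "p k" "g s0" "g a"] p_def by simp
            moreover have "dist (q k) (g s0) < \<epsilon>" using Nk(2) gb dist_triangle[of "q k" "g s0" "g b"] q_def by simp
            moreover have "le (p k) (q k)"
            proof -
              have ai: "a \<in> {0..L (r (k+N))}" and bi: "b \<in> {0..L (r (k+N))}" using a b ab Nk(3) by auto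
              have "le (\<gamma> (r (k+N)) a) (\<gamma> (r (k+N)) b)"
                using curves[of "r (k+N)"] ai bi ab' unfolding future_causal_curve_def by blast
              then show ?thesis using c_id[OF ai] c_id[OF bi] p_def q_def by simp
            qed
            ultimately show ?thesis using ebU by (auto simp: dist_commute)
          qed
          moreover have "p \<longlonglongrightarrow> g a" unfolding p_def
            using LIMSEQ_ignore_initial_segment[OF conv[of a], of N] by simp
          moreover have "q \<longlonglongrightarrow> g b" unfolding q_def
            using LIMSEQ_ignore_initial_segment[OF conv[of b], of N] by simp
          moreover have "g a \<in> closure U" using ga ebU epos closure_subset by (force simp: dist_commute)
          moreover have "g b \<in> closure U" using gb ebU epos closure_subset by (force simp: dist_commute)
          ultimately show "(\<forall>n. p n \<in> U \<and> q n \<in> U \<and> le (p n) (q n)) \<and>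
            p \<longlonglongrightarrow> g a \<and> g a \<in> closure U \<and> q \<longlonglongrightarrow> g b \<and> g b \<in> closure U" by blast
        qed
        then show ?thesis .
      qed
    qed
  qed
  have gmono: "le (g t1) (g t2)" if "0 \<le> t1" "t1 \<le> t2" for t1 t2
  proof (rule local_to_global[where R = "\<lambda>a b. le (g a) (g b)"])
    show "le (g a) (g c)" if "le (g a) (g b)" "le (g b) (g c)" for a b c using transle that by blast
    show "le (g a) (g a)" for a by (rule reflle)
    show "t1 \<le> t2" by fact
    fix s assume "s \<in> {t1..t2}"
    obtain d where "d > 0" "\<forall>a b. a \<in> ball s d \<inter> {0..} \<longrightarrow> b \<in> ball s d \<inter> {0..} \<longrightarrow> a \<le> b
      \<longrightarrow> le (g a) (g b)" using loc by blast
    then show "\<exists>d>0. \<forall>a b. a \<in> ball s d \<inter> {t1..t2} \<longrightarrow>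
                 b \<in> ball s d \<inter> {t1..t2} \<longrightarrow> a \<le> b \<longrightarrow> le (g a) (g b)"
      using that(1) by (intro exI[of _ d]) auto
  qed
  have nontail: "\<exists>\<rho>>0. \<forall>T0\<ge>0. \<exists>t\<ge>T0. \<rho> \<le> dist (g t) y" for y
  proof -
    obtain U Cc where U: "y \<in> interior U" and Cc: "Cc > 0" and
      cbd: "\<And>\<sigma> I. causal_curve le \<sigma> I \<and> \<sigma> ` I \<subseteq> U \<Longrightarrow> curve_length \<sigma> I \<le> ereal Cc"
      using comp unfolding d_compatible_def by blast
    obtain \<rho>0 where r0: "\<rho>0 > 0" and rb: "ball y \<rho>0 \<subseteq> interior U"
      using U open_interior[of U] open_contains_ball by blast
    have rbU: "ball y \<rho>0 \<subseteq> U" using rb interior_subset by blast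
    show ?thesis
    proof (rule ccontr)
      assume "\<not> ?thesis"
      then obtain T0 where T0: "T0 \<ge> 0" "\<And>t. t \<ge> T0 \<Longrightarrow> dist (g t) y < \<rho>0/2"
        using r0 by (metis half_gt_zero not_le)
      define T1 where "T1 = T0 + 2 * Cc"
      obtain N where N: "\<forall>k\<ge>N. \<forall>t\<in>{-T1..T1}. dist (c (r k) t) (g t) < \<rho>0/2"
        using unif[of "\<rho>0/2" T1] r0 by auto
      obtain N2 where N2: "\<And>k. k \<ge> N2 \<Longrightarrow> T1 \<le> L (r k)"
        using evL[of T1] unfolding eventually_sequentially by blast
      define k where "k = max N N2"
      have k: "T1 \<le> L (r k)" "\<forall>t\<in>{-T1..T1}. dist (c (r k) t) (g t) < \<rho>0/2"
        using N N2[of k] by (auto simp: k_def)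
      define n where "n = r k"
      define I where "I = {T0..T1}"
      have IL: "I \<subseteq> {0..L n}" using T0 k(1) by (auto simp: I_def n_def)
      have len: "curve_length (\<gamma> n) I = ereal (2 * Cc)"
        using arclength[of T0 T1 n] T0 k(1) Cc by (simp add: I_def T1_def n_def)
      have inU: "\<gamma> n ` I \<subseteq> U"
      proof
        fix z assume "z \<in> \<gamma> n ` I"
        then obtain t where t: "t \<in> I" "z = \<gamma> n t" by blast
        have "t \<in> {-T1..T1}" using t(1) T0 Cc by (auto simp: I_def T1_def)
        then have "dist (c n t) (g t) < \<rho>0/2" using k(2) n_def by blast
        moreover have "dist (g t) y < \<rho>0/2" using T0(2) t(1) by (auto simp: I_def)
        moreover have "c n t = \<gamma> n t" using c_id IL t(1) by blast
        ultimately have "dist z y < \<rho>0" using dist_triangle[of z y "g t"] t(2) by simp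
        then show "z \<in> U" using rbU by (auto simp: dist_commute)
      qed
      have "future_causal_curve le (\<gamma> n) I"
        unfolding future_causal_curve_def
      proof (intro conjI)
        show "is_interval I" by (simp add: I_def is_interval_cc)
        show "locally_lipschitz_on I (\<gamma> n)" unfolding locally_lipschitz_on_def
        proof
          fix t assume "t \<in> I"
          show "\<exists>e>0. \<exists>C. \<forall>s\<in>I \<inter> ball t e. \<forall>u\<in>I \<inter> ball t e. dist (\<gamma> n s) (\<gamma> n u) \<le> C * \<bar>s - u\<bar>"
          proof -
            have "\<forall>s\<in>I \<inter> ball t 1. \<forall>u\<in>I \<inter> ball t 1. dist (\<gamma> n s) (\<gamma> n u) \<le> 1 * \<bar>s - u\<bar>"
              using lip IL by (metis IntD1 mult_1 subsetD)
            then show ?thesis using zero_less_one by blast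
          qed
        qed
        show "\<exists>s\<in>I. \<exists>t\<in>I. \<gamma> n s \<noteq> \<gamma> n t"
        proof (rule ccontr)
          assume "\<not> ?thesis"
          then have "curve_length (\<gamma> n) I \<le> 0" using const_len by blast
          then show False using len Cc by simp
        qed
        show "\<forall>t1\<in>I. \<forall>t2\<in>I. t1 < t2 \<longrightarrow> le (\<gamma> n t1) (\<gamma> n t2)"
          using curves[of n] IL unfolding future_causal_curve_def by blast
      qed
      then have "curve_length (\<gamma> n) I \<le> ereal Cc"
        using cbd inU unfolding causal_curve_def by blast
      then show False using len Cc by simp
    qed
  qed
  show ?thesis
  proof (intro exI conjI)
    show "strict_mono r" by (rule rmono)
    show "future_causal_curve le g {0..}"
      unfolding future_causal_curve_def
    proof (intro conjI)
      show "is_interval {0::real..}" by (rule is_interval_ci)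
      show "locally_lipschitz_on {0..} g" unfolding locally_lipschitz_on_def
      proof
        fix t :: real assume "t \<in> {0..}"
        have "\<forall>s\<in>{0..} \<inter> ball t 1. \<forall>u\<in>{0..} \<inter> ball t 1. dist (g s) (g u) \<le> 1 * \<bar>s - u\<bar>"
          using glip by simp
        then show "\<exists>e>0. \<exists>C. \<forall>s\<in>{0..} \<inter> ball t e. \<forall>u\<in>{0..} \<inter> ball t e. dist (g s) (g u) \<le> C * \<bar>s - u\<bar>"
          using zero_less_one by blast
      qed
      show "\<exists>s\<in>{0..}. \<exists>t\<in>{0..}. g s \<noteq> g t"
      proof -
        obtain \<rho> where "\<rho> > 0" "\<forall>T0\<ge>0. \<exists>t\<ge>T0. \<rho> \<le> dist (g t) (g 0)" using nontail by blast
        then obtain t where "t \<ge> 0" "\<rho> \<le> dist (g t) (g 0)" by auto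
        then have "g t \<noteq> g 0" using \<open>\<rho> > 0\<close> by auto
        then show ?thesis using \<open>t \<ge> 0\<close> by auto
      qed
      show "\<forall>t1\<in>{0..}. \<forall>t2\<in>{0..}. t1 < t2 \<longrightarrow> le (g t1) (g t2)"
        using gmono by auto
    qed
    show "\<forall>T>0. \<forall>e>0. \<exists>N. \<forall>k\<ge>N. T \<le> L (r k) \<and> (\<forall>t\<in>{0..T}. dist (\<gamma> (r k) t) (g t) < e)"
    proof (intro allI impI)
      fix T e :: real assume "T > 0" "e > 0"
      obtain N1 where N1: "\<forall>k\<ge>N1. \<forall>t\<in>{-T..T}. dist (c (r k) t) (g t) < e"
        using unif \<open>e > 0\<close> by blast
      obtain N2 where N2: "\<And>k. k \<ge> N2 \<Longrightarrow> T \<le> L (r k)"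
        using evL[of T] unfolding eventually_sequentially by blast
      show "\<exists>N. \<forall>k\<ge>N. T \<le> L (r k) \<and> (\<forall>t\<in>{0..T}. dist (\<gamma> (r k) t) (g t) < e)"
      proof (intro exI[of _ "max N1 N2"] allI impI conjI ballI)
        fix k assume k: "max N1 N2 \<le> k"
        then show TL: "T \<le> L (r k)" using N2 by simp
        fix t assume t: "t \<in> {0..T}"
        then have "c (r k) t = \<gamma> (r k) t" using TL by (intro c_id) auto
        moreover have "dist (c (r k) t) (g t) < e" using N1 k t by auto
        ultimately show "dist (\<gamma> (r k) t) (g t) < e" by simp
      qed
    qed
    show "\<not> (\<exists>y. (g \<longlongrightarrow> y) at_top)"
    proof
      assume "\<exists>y. (g \<longlongrightarrow> y) at_top"
      then obtain y where y: "(g \<longlongrightarrow> y) at_top" by blast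
      obtain \<rho> where rho: "\<rho> > 0" "\<forall>T0\<ge>0. \<exists>t\<ge>T0. \<rho> \<le> dist (g t) y" using nontail by blast
      have "\<forall>\<^sub>F t in at_top. dist (g t) y < \<rho>" using y rho(1) unfolding tendsto_iff by blast
      then obtain T0 where T0: "\<And>t. t \<ge> T0 \<Longrightarrow> dist (g t) y < \<rho>" unfolding eventually_at_top_linorder by blast
      obtain t where "t \<ge> max T0 0" "\<rho> \<le> dist (g t) y" using rho(2) by (meson max.cobounded2)
      then show False using T0[of t] by simp
    qed
  qed
qed
end
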